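(* Let $(G,\phi,(g_1,\dots,g_n))$ and $(G',\phi',(g_1',\dots,g_n'))$ be $n$-expansion groups. Let $G''$ be the subgroup of $G\times G'$ generated by the pairs $g_i''=(g_i,g_i')$, $i\in[n]$, and let $\phi'':G''\to V_{[n]}$ be $\phi''(x,x')=\phi(x)$. Then $(G'',\phi'',(g_1'',\dots,g_n''))$ is an $n$-expansion group.
   Context: $V_{[n]}=\mathbb{F}_2^n$ with basis $e_1,\dots,e_n$. An $n$-expansion group is a triple $(G,\phi,(g_1,\dots,g_n))$: $G$ a group, $\phi:G\to V_{[n]}$ a homomorphism with $\phi(g_i)=e_i$, $g_i^2=1$ for all $i$, $\ker\phi$ an elementary abelian $2$-group, and $[G,G]=\ker\phi$. Note that $G''$ is contained in the fibered product of $G$ and $G'$ over $V_{[n]}$, so $\phi(x)=\phi'(x')$ for $(x,x')\in G''$. *)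

theory Defs
  imports "HOL-Algebra.Algebra"
begin

text \<open>V_[n] = F_2^n, realised as the subsets of [n] = {1..n} under symmetric
  difference; the basis vector e_i is the singleton {i}.\<close>
definition Vn :: "nat \<Rightarrow> nat set monoid" where
  "Vn n = \<lparr> carrier = Pow {1..n}, monoid.mult = (\<lambda>A B. (A - B) \<union> (B - A)), one = {} \<rparr>"

definition basis_e :: "nat \<Rightarrow> nat set" where
  "basis_e i = {i}"

definition elementary_abelian_2 :: "('a, 'm) monoid_scheme \<Rightarrow> 'a set \<Rightarrow> bool" where
  "elementary_abelian_2 G K \<longleftrightarrow> subgroup K G \<and>
     (\<forall>x\<in>K. \<forall>y\<in>K. x \<otimes>\<^bsub>G\<^esub> y = y \<otimes>\<^bsub>G\<^esub> x) \<and>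
     (\<forall>x\<in>K. x \<otimes>\<^bsub>G\<^esub> x = \<one>\<^bsub>G\<^esub>)"

definition expansion_group ::
  "nat \<Rightarrow> ('a, 'm) monoid_scheme \<Rightarrow> ('a \<Rightarrow> nat set) \<Rightarrow> (nat \<Rightarrow> 'a) \<Rightarrow> bool" where
  "expansion_group n G phi g \<longleftrightarrow>
     group G \<and> phi \<in> hom G (Vn n) \<and>
     (\<forall>i\<in>{1..n}. g i \<in> carrier G \<and> phi (g i) = basis_e i \<and> g i \<otimes>\<^bsub>G\<^esub> g i = \<one>\<^bsub>G\<^esub>) \<and>
     elementary_abelian_2 G (kernel G (Vn n) phi) \<and>
     derived G (carrier G) = kernel G (Vn n) phi"

end

theory Submission
  imports Defs
begin

lemma symdiff_finprod:
  assumes Q: "comm_group Q" and fI: "finite I" and q: "q \<in> I \<rightarrow> carrier Q"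
    and sq: "\<forall>i\<in>I. q i \<otimes>\<^bsub>Q\<^esub> q i = \<one>\<^bsub>Q\<^esub>" and AI: "A \<subseteq> I" and BI: "B \<subseteq> I"
  shows "finprod Q q A \<otimes>\<^bsub>Q\<^esub> finprod Q q B = finprod Q q ((A - B) \<union> (B - A))"
proof -
  interpret comm_group Q by fact
  have fA: "finite A" and fB: "finite B" using AI BI fI finite_subset by auto
  have qA: "q \<in> A' \<rightarrow> carrier Q" if "A' \<subseteq> I" for A' using q that by auto
  have a: "finprod Q q A = finprod Q q (A - B) \<otimes>\<^bsub>Q\<^esub> finprod Q q (A \<inter> B)"
  proof -
    have "A = (A - B) \<union> (A \<inter> B)" by auto
    then have "finprod Q q A = finprod Q q ((A - B) \<union> (A \<inter> B))" by simp
    also have "\<dots> = finprod Q q (A - B) \<otimes>\<^bsub>Q\<^esub> finprod Q q (A \<inter> B)"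
      by (rule finprod_Un_disjoint) (use fA AI qA in auto)
    finally show ?thesis .
  qed
  have b: "finprod Q q B = finprod Q q (B - A) \<otimes>\<^bsub>Q\<^esub> finprod Q q (A \<inter> B)"
  proof -
    have "B = (B - A) \<union> (A \<inter> B)" by auto
    then have "finprod Q q B = finprod Q q ((B - A) \<union> (A \<inter> B))" by simp
    also have "\<dots> = finprod Q q (B - A) \<otimes>\<^bsub>Q\<^esub> finprod Q q (A \<inter> B)"
      by (rule finprod_Un_disjoint) (use fB BI qA in auto)
    finally show ?thesis .
  qed
  have c: "finprod Q q (A \<inter> B) \<otimes>\<^bsub>Q\<^esub> finprod Q q (A \<inter> B) = \<one>\<^bsub>Q\<^esub>"
  proof -
    have "finprod Q q (A \<inter> B) \<otimes>\<^bsub>Q\<^esub> finprod Q q (A \<inter> B) = finprod Q (\<lambda>i. q i \<otimes>\<^bsub>Q\<^esub> q i) (A \<inter> B)"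
      by (rule finprod_multf[symmetric]) (use AI qA in auto)
    also have "\<dots> = finprod Q (\<lambda>i. \<one>\<^bsub>Q\<^esub>) (A \<inter> B)"
      using AI sq by (intro finprod_cong) (auto simp: simp_implies_def)
    finally show ?thesis by simp
  qed
  have d: "finprod Q q ((A - B) \<union> (B - A)) = finprod Q q (A - B) \<otimes>\<^bsub>Q\<^esub> finprod Q q (B - A)"
    by (rule finprod_Un_disjoint) (use fA fB AI BI qA in auto)
  have c1: "finprod Q q (A - B) \<in> carrier Q" "finprod Q q (B - A) \<in> carrier Q"
     "finprod Q q (A \<inter> B) \<in> carrier Q"
    by (rule finprod_closed, rule qA, use AI BI in blast)+
  show ?thesis unfolding a b d
    using c c1 by (metis m_assoc m_comm m_closed r_one)
qed


lemma hom_mult_Vn: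
  assumes "phi \<in> hom G (Vn n)" "x \<in> carrier G" "y \<in> carrier G"
  shows "phi (x \<otimes>\<^bsub>G\<^esub> y) = (phi x - phi y) \<union> (phi y - phi x)"
  using assms by (simp add: hom_def Vn_def)

lemma hom_one_empty:
  assumes "group G" "phi \<in> hom G (Vn n)"
  shows "phi \<one>\<^bsub>G\<^esub> = {}"
proof -
  interpret group G by fact
  have "phi (\<one>\<^bsub>G\<^esub> \<otimes>\<^bsub>G\<^esub> \<one>\<^bsub>G\<^esub>) = (phi \<one>\<^bsub>G\<^esub> - phi \<one>\<^bsub>G\<^esub>) \<union> (phi \<one>\<^bsub>G\<^esub> - phi \<one>\<^bsub>G\<^esub>)"
    using hom_mult_Vn[OF assms(2) one_closed one_closed] .
  then show ?thesis by simp
qed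

lemma hom_carrier_Vn:
  assumes "phi \<in> hom G (Vn n)" "x \<in> carrier G"
  shows "phi x \<subseteq> {1..n}"
  using assms by (auto simp add: hom_def Vn_def Pi_def)

theorem proposition3p13:
  fixes G :: "('a, 'm) monoid_scheme" and G' :: "('b, 'k) monoid_scheme"
    and phi :: "'a \<Rightarrow> nat set" and phi' :: "'b \<Rightarrow> nat set"
    and g :: "nat \<Rightarrow> 'a" and g' :: "nat \<Rightarrow> 'b"
  assumes "expansion_group n G phi g"
    and "expansion_group n G' phi' g'"
  shows "expansion_group n
           ((G \<times>\<times> G')\<lparr>carrier := generate (G \<times>\<times> G') ((\<lambda>i. (g i, g' i)) ` {1..n})\<rparr>)
           (\<lambda>(x, x'). phi x)
           (\<lambda>i. (g i, g' i))"
proof -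
  note E1 = assms(1)[unfolded expansion_group_def]
  note E2 = assms(2)[unfolded expansion_group_def]
  interpret G: group G using E1 by blast
  interpret G': group G' using E2 by blast
  have phom: "phi \<in> hom G (Vn n)" using E1 by blast
  have phom': "phi' \<in> hom G' (Vn n)" using E2 by blast
  have gi: "\<And>i. i \<in> {1..n} \<Longrightarrow> g i \<in> carrier G \<and> phi (g i) = {i} \<and> g i \<otimes>\<^bsub>G\<^esub> g i = \<one>\<^bsub>G\<^esub>"
    using E1 by (auto simp: basis_e_def)
  have gi': "\<And>i. i \<in> {1..n} \<Longrightarrow> g' i \<in> carrier G' \<and> phi' (g' i) = {i} \<and> g' i \<otimes>\<^bsub>G'\<^esub> g' i = \<one>\<^bsub>G'\<^esub>"
    using E2 by (auto simp: basis_e_def)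
  define P where "P = G \<times>\<times> G'"
  define gens where "gens = (\<lambda>i. (g i, g' i)) ` {1..n}"
  define H where "H = generate P gens"
  define Hg where "Hg = P\<lparr>carrier := H\<rparr>"
  interpret P: group P unfolding P_def by (rule DirProd_group) (unfold_locales)
  have gens_sub: "gens \<subseteq> carrier P" using gi gi' by (auto simp: gens_def P_def)
  have subH: "subgroup H P" unfolding H_def by (rule P.generate_is_subgroup[OF gens_sub])
  interpret Hg: group Hg unfolding Hg_def by (rule P.subgroup_imp_group[OF subH])
  have cHg[simp]: "carrier Hg = H" and mHg[simp]: "monoid.mult Hg = monoid.mult P"
    and oHg[simp]: "one Hg = one P" by (simp_all add: Hg_def)
  have HP: "H \<subseteq> carrier P" using subH subgroup.subset by blast
  define D where "D = derived Hg (carrier Hg)"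
  interpret D: normal D Hg unfolding D_def by (rule Hg.derived_self_is_normal)
  have D1: "D #>\<^bsub>Hg\<^esub> \<one>\<^bsub>P\<^esub> = D"
    using Hg.coset_mult_one[of D] D.subset by simp
  define Q where "Q = Hg Mod D"
  interpret Q: comm_group Q unfolding Q_def D_def by (rule Hg.derived_quot_is_comm_group)
  define q where "q = (\<lambda>i. D #>\<^bsub>Hg\<^esub> (g i, g' i))"
  have gensH: "(g i, g' i) \<in> H" if "i \<in> {1..n}" for i
    unfolding H_def gens_def by (rule generate.incl) (use that in auto)
  have qQ: "q \<in> {1..n} \<rightarrow> carrier Q"
    using gensH by (auto simp: q_def Q_def carrier_FactGroup)
  have qs: "finprod Q q {i} = q i" if "i \<in> {1..n}" for i
    using Q.finprod_insert[of "{}" i q] qQ that by (auto simp: Pi_def)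
  have invg: "inv\<^bsub>P\<^esub> (g i, g' i) = (g i, g' i)" if "i \<in> {1..n}" for i
    using gi[OF that] gi'[OF that] by (intro P.inv_equality) (auto simp: P_def)
  have qsq: "\<forall>i\<in>{1..n}. q i \<otimes>\<^bsub>Q\<^esub> q i = \<one>\<^bsub>Q\<^esub>"
  proof
    fix i assume i: "i \<in> {1..n}"
    have "q i \<otimes>\<^bsub>Q\<^esub> q i = D #>\<^bsub>Hg\<^esub> ((g i, g' i) \<otimes>\<^bsub>Hg\<^esub> (g i, g' i))"
      unfolding Q_def q_def using D.rcos_sum gensH[OF i] by simp
    also have "(g i, g' i) \<otimes>\<^bsub>Hg\<^esub> (g i, g' i) = \<one>\<^bsub>Hg\<^esub>"
      using gi[OF i] gi'[OF i] by (simp add: P_def)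
    also have "D #>\<^bsub>Hg\<^esub> \<one>\<^bsub>Hg\<^esub> = D" using D1 by simp
    finally show "q i \<otimes>\<^bsub>Q\<^esub> q i = \<one>\<^bsub>Q\<^esub>" by (simp add: Q_def)
  qed
  have inv_key: "phi (fst h) = phi' (snd h) \<and> phi (fst h) \<subseteq> {1..n} \<and>
      D #>\<^bsub>Hg\<^esub> h = finprod Q q (phi (fst h))" if "h \<in> H" for h
    using that unfolding H_def
  proof (induction h rule: generate.induct)
    case one
    show ?case using hom_one_empty[OF G.is_group phom] hom_one_empty[OF G'.is_group phom']
      using D1 Q.finprod_empty[of q] by (simp add: P_def Q_def)
  next
    case (incl h)
    then obtain i where i: "i \<in> {1..n}" and h: "h = (g i, g' i)" by (auto simp: gens_def)
    show ?case using gi[OF i] gi'[OF i] i qs[OF i] by (simp add: h q_def)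
  next
    case (inv h)
    then obtain i where i: "i \<in> {1..n}" and h: "h = (g i, g' i)" by (auto simp: gens_def)
    show ?case using gi[OF i] gi'[OF i] i qs[OF i] by (simp add: h invg[OF i] q_def)
  next
    case (eng h1 h2)
    have h1H: "h1 \<in> H" and h2H: "h2 \<in> H" using eng.hyps by (simp_all add: H_def)
    obtain a1 b1 where h1: "h1 = (a1, b1)" "a1 \<in> carrier G" "b1 \<in> carrier G'"
      using HP h1H by (cases h1) (auto simp: P_def)
    obtain a2 b2 where h2: "h2 = (a2, b2)" "a2 \<in> carrier G" "b2 \<in> carrier G'"
      using HP h2H by (cases h2) (auto simp: P_def)
    have m: "h1 \<otimes>\<^bsub>P\<^esub> h2 = (a1 \<otimes>\<^bsub>G\<^esub> a2, b1 \<otimes>\<^bsub>G'\<^esub> b2)" by (simp add: h1 h2 P_def)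
    have c1: "D #>\<^bsub>Hg\<^esub> (h1 \<otimes>\<^bsub>P\<^esub> h2) = (D #>\<^bsub>Hg\<^esub> h1) \<otimes>\<^bsub>Q\<^esub> (D #>\<^bsub>Hg\<^esub> h2)"
      using D.rcos_sum h1H h2H by (simp add: Q_def)
    have s1: "phi a1 \<subseteq> {1..n}" "phi a2 \<subseteq> {1..n}"
      and e1: "D #>\<^bsub>Hg\<^esub> h1 = finprod Q q (phi a1)" and e2: "D #>\<^bsub>Hg\<^esub> h2 = finprod Q q (phi a2)"
      using eng.IH unfolding h1 h2 fst_conv snd_conv by blast+
    have c2: "(D #>\<^bsub>Hg\<^esub> h1) \<otimes>\<^bsub>Q\<^esub> (D #>\<^bsub>Hg\<^esub> h2) = finprod Q q ((phi a1 - phi a2) \<union> (phi a2 - phi a1))"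
      unfolding e1 e2 by (rule symdiff_finprod[OF Q.comm_group_axioms _ qQ qsq s1]) simp
    have pe: "phi a1 = phi' b1" "phi a2 = phi' b2"
      using eng.IH unfolding h1 h2 fst_conv snd_conv by blast+
    have pm: "phi (a1 \<otimes>\<^bsub>G\<^esub> a2) = (phi a1 - phi a2) \<union> (phi a2 - phi a1)"
      by (rule hom_mult_Vn[OF phom h1(2) h2(2)])
    have pm': "phi' (b1 \<otimes>\<^bsub>G'\<^esub> b2) = (phi' b1 - phi' b2) \<union> (phi' b2 - phi' b1)"
      by (rule hom_mult_Vn[OF phom' h1(3) h2(3)])
    show ?case unfolding m fst_conv snd_conv
    proof (intro conjI)
      show "phi (a1 \<otimes>\<^bsub>G\<^esub> a2) = phi' (b1 \<otimes>\<^bsub>G'\<^esub> b2)" unfolding pm pm' pe ..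
      show "phi (a1 \<otimes>\<^bsub>G\<^esub> a2) \<subseteq> {1..n}" unfolding pm using s1 by blast
      show "D #>\<^bsub>Hg\<^esub> (a1 \<otimes>\<^bsub>G\<^esub> a2, b1 \<otimes>\<^bsub>G'\<^esub> b2) = finprod Q q (phi (a1 \<otimes>\<^bsub>G\<^esub> a2))"
        unfolding pm using c1 c2 m by simp
    qed
  qed
  define psi where "psi = (\<lambda>(x::'a, x'::'b). phi x)"
  have psi_eq: "psi h = phi (fst h)" for h by (cases h) (simp add: psi_def)
  have Hpair: "\<And>h. h \<in> H \<Longrightarrow> fst h \<in> carrier G \<and> snd h \<in> carrier G'"
    using HP by (auto simp: P_def)
  have invHg: "inv\<^bsub>Hg\<^esub> h = (inv\<^bsub>G\<^esub> fst h, inv\<^bsub>G'\<^esub> snd h)" if "h \<in> H" for h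
  proof -
    have "inv\<^bsub>Hg\<^esub> h = inv\<^bsub>P\<^esub> h" unfolding Hg_def by (rule P.m_inv_consistent[OF subH that])
    also have "\<dots> = inv\<^bsub>P\<^esub> (fst h, snd h)" by simp
    also have "\<dots> = (inv\<^bsub>G\<^esub> fst h, inv\<^bsub>G'\<^esub> snd h)"
      unfolding P_def by (rule inv_DirProd) (use Hpair[OF that] G.is_group G'.is_group in auto)
    finally show ?thesis .
  qed
  have multP: "x \<otimes>\<^bsub>P\<^esub> y = (fst x \<otimes>\<^bsub>G\<^esub> fst y, snd x \<otimes>\<^bsub>G'\<^esub> snd y)" for x y
    unfolding P_def by (rule mult_DirProd')
  have oneP: "\<one>\<^bsub>P\<^esub> = (\<one>\<^bsub>G\<^esub>, \<one>\<^bsub>G'\<^esub>)" by (simp add: P_def)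
  have derG: "derived G (carrier G) = kernel G (Vn n) phi" using E1 by blast
  have subDG: "subgroup (derived G (carrier G)) G" by (rule G.derived_is_subgroup) simp
  have dset: "fst h \<in> derived G (carrier G)" if "h \<in> derived_set Hg H" for h
  proof -
    from that obtain h1 h2 where hh: "h1 \<in> H" "h2 \<in> H"
      "h = h1 \<otimes>\<^bsub>Hg\<^esub> h2 \<otimes>\<^bsub>Hg\<^esub> inv\<^bsub>Hg\<^esub> h1 \<otimes>\<^bsub>Hg\<^esub> inv\<^bsub>Hg\<^esub> h2" by auto
    have "fst h = fst h1 \<otimes>\<^bsub>G\<^esub> fst h2 \<otimes>\<^bsub>G\<^esub> inv\<^bsub>G\<^esub> fst h1 \<otimes>\<^bsub>G\<^esub> inv\<^bsub>G\<^esub> fst h2"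
      using hh by (simp add: invHg multP)
    moreover have "fst h1 \<in> carrier G" "fst h2 \<in> carrier G" using Hpair hh by auto
    ultimately have "fst h \<in> derived_set G (carrier G)" by blast
    then show ?thesis unfolding derived_def by (rule generate.incl)
  qed
  have dsetH: "derived_set Hg H \<subseteq> H" using Hg.derived_set_in_carrier[of H] by simp
  have Dfst: "fst d \<in> derived G (carrier G)" if "d \<in> D" for d
  proof -
    have "d \<in> generate Hg (derived_set Hg H)" using that by (simp add: D_def derived_def)
    then show ?thesis
  proof (induction d rule: generate.induct)
    case one
    then show ?case using subgroup.one_closed[OF subDG] by (simp add: oneP)
  next
    case (incl h)
    then show ?case by (rule dset)
  next
    case (inv h)
    then have "h \<in> H" using dsetH by blast
    then show ?case using dset[OF inv] subgroup.m_inv_closed[OF subDG] by (simp add: invHg)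
  next
    case (eng h1 h2)
    then show ?case using subgroup.m_closed[OF subDG] by (simp add: multP)
  qed
  qed
  have Kdef: "kernel Hg (Vn n) psi = {h \<in> H. phi (fst h) = {}}"
    by (auto simp: kernel_def Vn_def psi_eq)
  have KD: "kernel Hg (Vn n) psi = D"
  proof
    show "D \<subseteq> kernel Hg (Vn n) psi"
    proof
      fix d assume d: "d \<in> D"
      have "d \<in> H" using D.subset d by auto
      moreover have "phi (fst d) = {}" using Dfst[OF d] unfolding derG by (simp add: kernel_def Vn_def)
      ultimately show "d \<in> kernel Hg (Vn n) psi" unfolding Kdef by blast
    qed
  next
    show "kernel Hg (Vn n) psi \<subseteq> D"
    proof
      fix k assume "k \<in> kernel Hg (Vn n) psi"
      then have k: "k \<in> H" "phi (fst k) = {}" unfolding Kdef by auto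
      have "D #>\<^bsub>Hg\<^esub> k = finprod Q q {}" using inv_key[OF k(1)] k(2) by simp
      also have "\<dots> = D" using Q.finprod_empty[of q] by (simp add: Q_def)
      finally show "k \<in> D" using Hg.coset_join1[of D k] k(1) D.subgroup_axioms by simp
    qed
  qed
  have kerG: "x \<in> kernel G (Vn n) phi \<longleftrightarrow> x \<in> carrier G \<and> phi x = {}" for x
    by (simp add: kernel_def Vn_def)
  have kerG': "x \<in> kernel G' (Vn n) phi' \<longleftrightarrow> x \<in> carrier G' \<and> phi' x = {}" for x
    by (simp add: kernel_def Vn_def)
  have EA1: "elementary_abelian_2 G (kernel G (Vn n) phi)" using E1 by blast
  have EA2: "elementary_abelian_2 G' (kernel G' (Vn n) phi')" using E2 by blast
  have Kparts: "fst x \<in> kernel G (Vn n) phi \<and> snd x \<in> kernel G' (Vn n) phi'"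
    if "x \<in> kernel Hg (Vn n) psi" for x
  proof -
    have x: "x \<in> H" "phi (fst x) = {}" using that unfolding Kdef by auto
    then show ?thesis using inv_key[OF x(1)] Hpair[OF x(1)] by (simp add: kerG kerG')
  qed
  have "expansion_group n Hg psi (\<lambda>i. (g i, g' i))"
    unfolding expansion_group_def
  proof (intro conjI)
    show "group Hg" by (rule Hg.is_group)
    show "psi \<in> hom Hg (Vn n)"
    proof (rule homI)
      fix x assume "x \<in> carrier Hg"
      then show "psi x \<in> carrier (Vn n)"
        using hom_carrier_Vn[OF phom] Hpair by (auto simp: psi_eq Vn_def)
    next
      fix x y assume "x \<in> carrier Hg" "y \<in> carrier Hg"
      then show "psi (x \<otimes>\<^bsub>Hg\<^esub> y) = psi x \<otimes>\<^bsub>Vn n\<^esub> psi y"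
        using hom_mult_Vn[OF phom] Hpair by (simp add: psi_eq multP Vn_def)
    qed
    show "\<forall>i\<in>{1..n}. (g i, g' i) \<in> carrier Hg \<and> psi (g i, g' i) = basis_e i \<and>
        (g i, g' i) \<otimes>\<^bsub>Hg\<^esub> (g i, g' i) = \<one>\<^bsub>Hg\<^esub>"
      using gi gi' gensH by (simp add: psi_def basis_e_def multP oneP)
    show "derived Hg (carrier Hg) = kernel Hg (Vn n) psi" using KD by (simp add: D_def)
    show "elementary_abelian_2 Hg (kernel Hg (Vn n) psi)"
      unfolding elementary_abelian_2_def
    proof (intro conjI ballI)
      show "subgroup (kernel Hg (Vn n) psi) Hg" using KD D.subgroup_axioms by simp
    next
      fix x y assume x: "x \<in> kernel Hg (Vn n) psi" and y: "y \<in> kernel Hg (Vn n) psi"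
      show "x \<otimes>\<^bsub>Hg\<^esub> y = y \<otimes>\<^bsub>Hg\<^esub> x"
        using Kparts[OF x] Kparts[OF y] EA1 EA2 unfolding elementary_abelian_2_def
        by (simp add: multP)
    next
      fix x assume x: "x \<in> kernel Hg (Vn n) psi"
      show "x \<otimes>\<^bsub>Hg\<^esub> x = \<one>\<^bsub>Hg\<^esub>"
        using Kparts[OF x] EA1 EA2 unfolding elementary_abelian_2_def
        by (simp add: multP oneP)
    qed
  qed
  then show ?thesis unfolding Hg_def H_def gens_def P_def psi_def .
qed

end
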